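(* Let $G$ be a finite group and $p$ a prime. Then \[ \chi(\mathcal F^*_G)=|G|^{-1}\sum_{x\in G}\chi(\mathcal S^*_{C_G(x)}). \]
   Context: $\mathcal F^*_G$ is the category whose objects are the nonidentity $p$-subgroups of $G$, with $\mathcal F^*_G(H,K)=C_G(H)\backslash N_G(H,K)$, $N_G(H,K)=\{g\in G:g^{-1}Hg\le K\}$, composition induced by multiplication. For a finite group $X$, $\mathcal S^*_X$ is the poset of nonidentity $p$-subgroups of $X$ under inclusion. $\chi$ is Leinster's Euler characteristic: for a finite category $\mathcal C$, a weighting is $k^\bullet$ with $\sum_b|\mathcal C(a,b)|k^b=1$ for all $a$, a coweighting is $k_\bullet$ with $\sum_ak_a|\mathcal C(a,b)|=1$ for all $b$, and if both exist $\chi(\mathcal C)=\sum_bk^b=\sum_ak_a$ (for a finite poset, the sum of all values of the Möbius function; $0$ if empty). *)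

theory Defs
  imports "HOL-Algebra.Algebra"
begin

(* Leinster Euler characteristic of a finite category, which only depends on the
   finite object set Ob and the hom-set cardinalities zeta a b = |C(a,b)|. *)
definition is_weighting :: "'o set \<Rightarrow> ('o \<Rightarrow> 'o \<Rightarrow> nat) \<Rightarrow> ('o \<Rightarrow> rat) \<Rightarrow> bool" where
  "is_weighting Ob zeta k \<longleftrightarrow> (\<forall>a\<in>Ob. (\<Sum>b\<in>Ob. of_nat (zeta a b) * k b) = 1)"

definition is_coweighting :: "'o set \<Rightarrow> ('o \<Rightarrow> 'o \<Rightarrow> nat) \<Rightarrow> ('o \<Rightarrow> rat) \<Rightarrow> bool" where
  "is_coweighting Ob zeta k \<longleftrightarrow> (\<forall>b\<in>Ob. (\<Sum>a\<in>Ob. k a * of_nat (zeta a b)) = 1)"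

definition has_euler_char :: "'o set \<Rightarrow> ('o \<Rightarrow> 'o \<Rightarrow> nat) \<Rightarrow> bool" where
  "has_euler_char Ob zeta \<longleftrightarrow> (\<exists>k. is_weighting Ob zeta k) \<and> (\<exists>k. is_coweighting Ob zeta k)"

definition euler_char :: "'o set \<Rightarrow> ('o \<Rightarrow> 'o \<Rightarrow> nat) \<Rightarrow> rat" where
  "euler_char Ob zeta = (\<Sum>b\<in>Ob. (SOME k. is_weighting Ob zeta k) b)"

definition nonid_p_subgroups :: "('a, 'b) monoid_scheme \<Rightarrow> nat \<Rightarrow> 'a set set" where
  "nonid_p_subgroups G p = {H. subgroup H G \<and> (\<exists>n. card H = p ^ n) \<and> H \<noteq> {\<one>\<^bsub>G\<^esub>}}"

definition centralizer_set :: "('a, 'b) monoid_scheme \<Rightarrow> 'a set \<Rightarrow> 'a set" where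
  "centralizer_set G H = {g \<in> carrier G. \<forall>h\<in>H. g \<otimes>\<^bsub>G\<^esub> h = h \<otimes>\<^bsub>G\<^esub> g}"

definition transporter :: "('a, 'b) monoid_scheme \<Rightarrow> 'a set \<Rightarrow> 'a set \<Rightarrow> 'a set" where
  "transporter G H K = {g \<in> carrier G. (\<lambda>h. inv\<^bsub>G\<^esub> g \<otimes>\<^bsub>G\<^esub> h \<otimes>\<^bsub>G\<^esub> g) ` H \<subseteq> K}"

(* |F*_G(H,K)| = |C_G(H) \ N_G(H,K)|: number of right cosets C_G(H) g, g in N_G(H,K) *)
definition fusion_hom_card :: "('a, 'b) monoid_scheme \<Rightarrow> 'a set \<Rightarrow> 'a set \<Rightarrow> nat" where
  "fusion_hom_card G H K = card ((\<lambda>g. r_coset G (centralizer_set G H) g) ` transporter G H K)"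

definition fusion_chi_defined :: "('a, 'b) monoid_scheme \<Rightarrow> nat \<Rightarrow> bool" where
  "fusion_chi_defined G p = has_euler_char (nonid_p_subgroups G p) (fusion_hom_card G)"

definition fusion_chi :: "('a, 'b) monoid_scheme \<Rightarrow> nat \<Rightarrow> rat" where
  "fusion_chi G p = euler_char (nonid_p_subgroups G p) (fusion_hom_card G)"

definition poset_chi :: "('a, 'b) monoid_scheme \<Rightarrow> nat \<Rightarrow> rat" where
  "poset_chi G p = euler_char (nonid_p_subgroups G p) (\<lambda>H K. of_bool (H \<subseteq> K))"

end

theory Submission
  imports Defs
begin


lemma weight_exists:
  fixes Ob :: "'a::order set" and t :: "'a \<Rightarrow> rat"
  assumes "finite Ob"
  shows "\<exists>k. \<forall>a\<in>Ob. (\<Sum>b\<in>Ob. of_nat (of_bool (a \<le> b)) * k b) = t a"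
  using assms
proof (induction "card Ob" arbitrary: Ob rule: less_induct)
  case less
  show ?case
  proof (cases "Ob = {}")
    case True then show ?thesis by simp
  next
    case False
    obtain m where m: "m \<in> Ob" "\<forall>b\<in>Ob. b \<le> m \<longrightarrow> m = b"
      using finite_has_minimal[OF less.prems False] by blast
    let ?O = "Ob - {m}"
    have "card ?O < card Ob" by (rule card_Diff1_less[OF less.prems m(1)])
    then obtain k where k: "\<forall>a\<in>?O. (\<Sum>b\<in>?O. of_nat (of_bool (a \<le> b)) * k b) = t a"
      using less.hyps less.prems by auto
    define k' where "k' = k(m := t m - (\<Sum>b\<in>?O. of_nat (of_bool (m \<le> b)) * k b))"
    have sp: "(\<Sum>b\<in>Ob. of_nat (of_bool (a \<le> b)) * k' b) =
        of_nat (of_bool (a \<le> m)) * k' m + (\<Sum>b\<in>?O. of_nat (of_bool (a \<le> b)) * k b)" for a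
    proof -
      have "(\<Sum>b\<in>Ob. of_nat (of_bool (a \<le> b)) * k' b) =
        of_nat (of_bool (a \<le> m)) * k' m + (\<Sum>b\<in>?O. of_nat (of_bool (a \<le> b)) * k' b)"
        by (rule sum.remove[OF less.prems m(1)])
      moreover have "(\<Sum>b\<in>?O. of_nat (of_bool (a \<le> b)) * k' b) = (\<Sum>b\<in>?O. of_nat (of_bool (a \<le> b)) * k b)"
        by (rule sum.cong) (auto simp: k'_def)
      ultimately show ?thesis by simp
    qed
    have "\<forall>a\<in>Ob. (\<Sum>b\<in>Ob. of_nat (of_bool (a \<le> b)) * k' b) = t a"
    proof
      fix a assume a: "a \<in> Ob"
      show "(\<Sum>b\<in>Ob. of_nat (of_bool (a \<le> b)) * k' b) = t a"
      proof (cases "a = m")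
        case True
        have "k' m = t m - (\<Sum>b\<in>?O. of_nat (of_bool (m \<le> b)) * k b)" by (simp add: k'_def)
        then show ?thesis using sp[of m] True by simp
      next
        case False
        then have "\<not> a \<le> m" using m a by auto
        then show ?thesis using sp k a False by simp
      qed
    qed
    then show ?thesis by blast
  qed
qed

lemma coweight_exists:
  fixes Ob :: "'a::order set" and t :: "'a \<Rightarrow> rat"
  assumes "finite Ob"
  shows "\<exists>k. \<forall>b\<in>Ob. (\<Sum>a\<in>Ob. k a * of_nat (of_bool (a \<le> b))) = t b"
  using assms
proof (induction "card Ob" arbitrary: Ob rule: less_induct)
  case less
  show ?case
  proof (cases "Ob = {}")
    case True then show ?thesis by simp
  next
    case False
    obtain m where m: "m \<in> Ob" "\<forall>b\<in>Ob. m \<le> b \<longrightarrow> m = b"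
      using finite_has_maximal[OF less.prems False] by blast
    let ?O = "Ob - {m}"
    have "card ?O < card Ob" by (rule card_Diff1_less[OF less.prems m(1)])
    then obtain k where k: "\<forall>b\<in>?O. (\<Sum>a\<in>?O. k a * of_nat (of_bool (a \<le> b))) = t b"
      using less.hyps less.prems by auto
    define k' where "k' = k(m := t m - (\<Sum>a\<in>?O. k a * of_nat (of_bool (a \<le> m))))"
    have sp: "(\<Sum>a\<in>Ob. k' a * of_nat (of_bool (a \<le> b))) =
        k' m * of_nat (of_bool (m \<le> b)) + (\<Sum>a\<in>?O. k a * of_nat (of_bool (a \<le> b)))" for b
    proof -
      have "(\<Sum>a\<in>Ob. k' a * of_nat (of_bool (a \<le> b))) =
        k' m * of_nat (of_bool (m \<le> b)) + (\<Sum>a\<in>?O. k' a * of_nat (of_bool (a \<le> b)))"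
        by (rule sum.remove[OF less.prems m(1)])
      moreover have "(\<Sum>a\<in>?O. k' a * of_nat (of_bool (a \<le> b))) = (\<Sum>a\<in>?O. k a * of_nat (of_bool (a \<le> b)))"
        by (rule sum.cong) (auto simp: k'_def)
      ultimately show ?thesis by simp
    qed
    have "\<forall>b\<in>Ob. (\<Sum>a\<in>Ob. k' a * of_nat (of_bool (a \<le> b))) = t b"
    proof
      fix b assume b: "b \<in> Ob"
      show "(\<Sum>a\<in>Ob. k' a * of_nat (of_bool (a \<le> b))) = t b"
      proof (cases "b = m")
        case True
        have "k' m = t m - (\<Sum>a\<in>?O. k a * of_nat (of_bool (a \<le> m)))" by (simp add: k'_def)
        then show ?thesis using sp[of m] True by simp
      next
        case False
        then have "\<not> m \<le> b" using m b by auto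
        then show ?thesis using sp k b False by simp
      qed
    qed
    then show ?thesis by blast
  qed
qed

lemma weight_coweight_sum:
  assumes "finite Ob" "is_weighting Ob z k" "is_coweighting Ob z k'"
  shows "sum k Ob = sum k' Ob"
proof -
  have "sum k Ob = (\<Sum>b\<in>Ob. (\<Sum>a\<in>Ob. k' a * of_nat (z a b)) * k b)"
    using assms(3) unfolding is_coweighting_def by simp
  also have "\<dots> = (\<Sum>a\<in>Ob. k' a * (\<Sum>b\<in>Ob. of_nat (z a b) * k b))"
    by (simp add: sum_distrib_left sum_distrib_right mult.assoc) (rule sum.swap)
  also have "\<dots> = sum k' Ob"
    using assms(2) unfolding is_weighting_def by simp
  finally show ?thesis .
qed

lemma euler_char_eq:
  assumes "finite Ob" "\<exists>k. is_weighting Ob z k" "is_coweighting Ob z k'"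
  shows "euler_char Ob z = sum k' Ob"
  unfolding euler_char_def
  using weight_coweight_sum[OF assms(1) someI_ex[OF assms(2)] assms(3)] .




definition cj :: "('a, 'b) monoid_scheme \<Rightarrow> 'a \<Rightarrow> 'a set \<Rightarrow> 'a set" where
  "cj G g H = (\<lambda>h. inv\<^bsub>G\<^esub> g \<otimes>\<^bsub>G\<^esub> h \<otimes>\<^bsub>G\<^esub> g) ` H"

context group begin

lemma cancel1 [simp]: "x \<in> carrier G \<Longrightarrow> y \<in> carrier G \<Longrightarrow> x \<otimes> (inv x \<otimes> y) = y"
  by (simp add: m_assoc[symmetric])
lemma cancel2 [simp]: "x \<in> carrier G \<Longrightarrow> y \<in> carrier G \<Longrightarrow> inv x \<otimes> (x \<otimes> y) = y"
  by (simp add: m_assoc[symmetric])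

lemma cj_inv_eq: "g \<in> carrier G \<Longrightarrow> h \<in> carrier G \<Longrightarrow> inv (inv g \<otimes> h \<otimes> g) = inv g \<otimes> inv h \<otimes> g"
  by (simp add: inv_mult_group m_assoc)
lemma cj_mult_eq: "g \<in> carrier G \<Longrightarrow> h1 \<in> carrier G \<Longrightarrow> h2 \<in> carrier G \<Longrightarrow> (inv g \<otimes> h1 \<otimes> g) \<otimes> (inv g \<otimes> h2 \<otimes> g) = inv g \<otimes> (h1 \<otimes> h2) \<otimes> g"
  by (simp add: m_assoc)

lemma cj_subgroup:
  assumes "subgroup H G" "g \<in> carrier G"
  shows "subgroup (cj G g H) G"
proof -
  have Hc: "H \<subseteq> carrier G" using assms(1) subgroup.subset by blast
  have one: "\<one> \<in> H" using assms(1) subgroup.one_closed by blast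
  show ?thesis
  proof (rule subgroupI)
    show "cj G g H \<subseteq> carrier G" using Hc assms(2) unfolding cj_def by blast
    show "cj G g H \<noteq> {}" using one unfolding cj_def by blast
  next
    fix a assume "a \<in> cj G g H"
    then obtain h where h: "h \<in> H" "a = inv g \<otimes> h \<otimes> g" unfolding cj_def by (rule imageE)
    have hc: "h \<in> carrier G" using h(1) Hc by (rule subsetD[rotated])
    have "inv a = inv g \<otimes> inv h \<otimes> g"
      unfolding h(2) by (rule cj_inv_eq[OF assms(2) hc])
    moreover have "inv h \<in> H" by (rule subgroup.m_inv_closed[OF assms(1) h(1)])
    ultimately show "inv a \<in> cj G g H" unfolding cj_def by (rule image_eqI)
  next
    fix a b assume ab: "a \<in> cj G g H" "b \<in> cj G g H"
    obtain h1 where h1: "h1 \<in> H" "a = inv g \<otimes> h1 \<otimes> g" using ab(1) unfolding cj_def by (rule imageE)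
    obtain h2 where h2: "h2 \<in> H" "b = inv g \<otimes> h2 \<otimes> g" using ab(2) unfolding cj_def by (rule imageE)
    note h = h1 h2
    have hc: "h1 \<in> carrier G" "h2 \<in> carrier G" using h(1,3) Hc by auto
    have "a \<otimes> b = inv g \<otimes> (h1 \<otimes> h2) \<otimes> g"
      unfolding h(2,4) by (rule cj_mult_eq[OF assms(2) hc])
    moreover have "h1 \<otimes> h2 \<in> H" by (rule subgroup.m_closed[OF assms(1) h(1,3)])
    ultimately show "a \<otimes> b \<in> cj G g H" unfolding cj_def by (rule image_eqI)
  qed
qed

lemma cj_inj:
  assumes "g \<in> carrier G"
  shows "inj_on (\<lambda>h. inv g \<otimes> h \<otimes> g) (carrier G)"
  using assms by (intro inj_onI) (simp add: m_assoc)

lemma cj_card: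
  assumes "H \<subseteq> carrier G" "g \<in> carrier G"
  shows "card (cj G g H) = card H"
  unfolding cj_def using assms by (intro card_image inj_on_subset[OF cj_inj]) auto

lemma cj_sub_iff:
  assumes "H \<subseteq> carrier G" "K \<subseteq> carrier G" "g \<in> carrier G"
  shows "cj G g H \<subseteq> K \<longleftrightarrow> H \<subseteq> cj G (inv g) K"
proof
  assume a: "cj G g H \<subseteq> K"
  show "H \<subseteq> cj G (inv g) K"
  proof
    fix h assume h: "h \<in> H"
    then have hc: "h \<in> carrier G" using assms by auto
    have "inv g \<otimes> h \<otimes> g \<in> K" using a h by (auto simp: cj_def)
    moreover have "h = inv (inv g) \<otimes> (inv g \<otimes> h \<otimes> g) \<otimes> inv g"
      using hc assms(3) by (simp add: m_assoc)
    ultimately show "h \<in> cj G (inv g) K" unfolding cj_def by blast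
  qed
next
  assume a: "H \<subseteq> cj G (inv g) K"
  show "cj G g H \<subseteq> K"
  proof
    fix x assume "x \<in> cj G g H"
    then obtain h where h: "h \<in> H" "x = inv g \<otimes> h \<otimes> g" by (auto simp: cj_def)
    then obtain k where k: "k \<in> K" "h = inv (inv g) \<otimes> k \<otimes> inv g" using a by (auto simp: cj_def)
    have kc: "k \<in> carrier G" using k assms by auto
    have "x = k" using h k kc assms(3) by (simp add: m_assoc)
    then show "x \<in> K" using k by simp
  qed
qed

lemma cj_inv_cj:
  assumes "H \<subseteq> carrier G" "g \<in> carrier G"
  shows "cj G (inv g) (cj G g H) = H"
proof -
  have "cj G (inv g) (cj G g H) = (\<lambda>h. inv (inv g) \<otimes> (inv g \<otimes> h \<otimes> g) \<otimes> inv g) ` H"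
    unfolding cj_def by (simp add: image_image)
  also have "\<dots> = (\<lambda>h. h) ` H"
    using assms by (intro image_cong) (auto simp: m_assoc)
  finally show ?thesis by simp
qed

lemma centralizer_subgroup:
  assumes "H \<subseteq> carrier G"
  shows "subgroup (centralizer_set G H) G"
proof (rule subgroupI)
  show "centralizer_set G H \<subseteq> carrier G" by (auto simp: centralizer_set_def)
  show "centralizer_set G H \<noteq> {}" using assms by (auto simp: centralizer_set_def intro!: exI[of _ \<one>])
next
  fix a assume a: "a \<in> centralizer_set G H"
  show "inv a \<in> centralizer_set G H"
    unfolding centralizer_set_def
  proof (safe)
    show "inv a \<in> carrier G" using a by (auto simp: centralizer_set_def)
    fix h assume h: "h \<in> H"
    have ac: "a \<in> carrier G" and ah: "a \<otimes> h = h \<otimes> a" using a h by (auto simp: centralizer_set_def)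
    have hc: "h \<in> carrier G" using h assms by auto
    have 1: "inv a \<otimes> (a \<otimes> h) \<otimes> inv a = h \<otimes> inv a" using ac hc by (simp add: m_assoc)
    have 2: "inv a \<otimes> (h \<otimes> a) \<otimes> inv a = inv a \<otimes> h" using ac hc by (simp add: m_assoc)
    show "inv a \<otimes> h = h \<otimes> inv a" using 1 2 ah by simp
  qed
next
  fix a b assume a: "a \<in> centralizer_set G H" and b: "b \<in> centralizer_set G H"
  show "a \<otimes> b \<in> centralizer_set G H"
    unfolding centralizer_set_def
  proof (safe)
    show "a \<otimes> b \<in> carrier G" using a b by (auto simp: centralizer_set_def)
    fix h assume h: "h \<in> H"
    have ac: "a \<in> carrier G" and ah: "a \<otimes> h = h \<otimes> a" using a h by (auto simp: centralizer_set_def)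
    have bc: "b \<in> carrier G" and bh: "b \<otimes> h = h \<otimes> b" using b h by (auto simp: centralizer_set_def)
    have hc: "h \<in> carrier G" using h assms by auto
    have "a \<otimes> b \<otimes> h = a \<otimes> (h \<otimes> b)" using ac bc hc bh by (simp add: m_assoc)
    also have "\<dots> = (a \<otimes> h) \<otimes> b" using ac bc hc by (simp add: m_assoc)
    also have "\<dots> = h \<otimes> a \<otimes> b" using ah by simp
    finally show "a \<otimes> b \<otimes> h = h \<otimes> (a \<otimes> b)" using ac bc hc by (simp add: m_assoc)
  qed
qed

lemma centralizer_cj_le:
  assumes "H \<subseteq> carrier G" "g \<in> carrier G" "finite (carrier G)"
  shows "card (centralizer_set G H) \<le> card (centralizer_set G (cj G g H))"
proof -
  have "cj G g (centralizer_set G H) \<subseteq> centralizer_set G (cj G g H)"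
  proof
    fix y assume "y \<in> cj G g (centralizer_set G H)"
    then obtain c where c: "c \<in> carrier G" "\<forall>h\<in>H. c \<otimes> h = h \<otimes> c" "y = inv g \<otimes> c \<otimes> g"
      by (auto simp: cj_def centralizer_set_def)
    show "y \<in> centralizer_set G (cj G g H)"
      unfolding centralizer_set_def
    proof safe
      show "y \<in> carrier G" using c assms by simp
      fix x assume "x \<in> cj G g H"
      then obtain h where h: "h \<in> H" "x = inv g \<otimes> h \<otimes> g" by (auto simp: cj_def)
      have hc: "h \<in> carrier G" using h assms by auto
      have "y \<otimes> x = inv g \<otimes> (c \<otimes> h) \<otimes> g"
        using c(1,3) h(2) hc assms(2) by (simp add: m_assoc)
      also have "\<dots> = inv g \<otimes> (h \<otimes> c) \<otimes> g" using c h by simp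
      also have "\<dots> = x \<otimes> y"
        using c(1,3) h(2) hc assms(2) by (simp add: m_assoc)
      finally show "y \<otimes> x = x \<otimes> y" .
    qed
  qed
  moreover have "card (cj G g (centralizer_set G H)) = card (centralizer_set G H)"
    using assms by (intro cj_card) (auto simp: centralizer_set_def)
  moreover have "finite (centralizer_set G (cj G g H))"
    using assms(3) by (rule finite_subset[rotated]) (auto simp: centralizer_set_def)
  ultimately show ?thesis by (metis card_mono)
qed

lemma centralizer_cj:
  assumes "H \<subseteq> carrier G" "g \<in> carrier G" "finite (carrier G)"
  shows "card (centralizer_set G (cj G g H)) = card (centralizer_set G H)"
proof -
  have "cj G g H \<subseteq> carrier G" using assms by (auto simp: cj_def)
  then have "card (centralizer_set G (cj G g H)) \<le> card (centralizer_set G (cj G (inv g) (cj G g H)))"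
    using assms by (intro centralizer_cj_le) auto
  then show ?thesis using centralizer_cj_le[OF assms] cj_inv_cj[OF assms(1,2)] by simp
qed

end



lemma transporter_cj: "transporter G H K = {g \<in> carrier G. cj G g H \<subseteq> K}"
  by (simp add: transporter_def cj_def)

context group begin

lemma transporter_card:
  assumes "H \<subseteq> carrier G" "finite (carrier G)"
  shows "fusion_hom_card G H K * card (centralizer_set G H) = card (transporter G H K)"
proof -
  let ?C = "centralizer_set G H"
  let ?T = "transporter G H K"
  let ?Q = "(\<lambda>g. ?C #> g) ` ?T"
  have sC: "subgroup ?C G" using centralizer_subgroup[OF assms(1)] .
  have Csub: "?C \<subseteq> carrier G" by (auto simp: centralizer_set_def)
  have Tsub: "?T \<subseteq> carrier G" by (auto simp: transporter_def)
  have U: "\<Union>?Q = ?T"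
  proof
    show "?T \<subseteq> \<Union>?Q" using rcos_self[OF _ sC] Tsub by blast
  next
    show "\<Union>?Q \<subseteq> ?T"
    proof
      fix y assume "y \<in> \<Union>?Q"
      then obtain g c where g: "g \<in> ?T" and c: "c \<in> ?C" and y: "y = c \<otimes> g"
        by (auto simp: r_coset_def)
      have gc: "g \<in> carrier G" and gK: "cj G g H \<subseteq> K" using g by (auto simp: transporter_cj)
      have cc: "c \<in> carrier G" and ch: "\<forall>h\<in>H. c \<otimes> h = h \<otimes> c" using c by (auto simp: centralizer_set_def)
      have "cj G y H = cj G g H"
        unfolding cj_def
      proof (rule image_cong[OF refl])
        fix h assume h: "h \<in> H"
        have hc: "h \<in> carrier G" using h assms by auto
        have "inv y \<otimes> h \<otimes> y = inv g \<otimes> (inv c \<otimes> (h \<otimes> c) \<otimes> g)"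
          using y cc gc hc by (simp add: inv_mult_group m_assoc)
        also have "\<dots> = inv g \<otimes> (inv c \<otimes> (c \<otimes> h) \<otimes> g)" using ch h by simp
        also have "\<dots> = inv g \<otimes> h \<otimes> g" using cc gc hc by (simp add: m_assoc)
        finally show "inv y \<otimes> h \<otimes> y = inv g \<otimes> h \<otimes> g" .
      qed
      moreover have "y \<in> carrier G" using y cc gc by simp
      ultimately show "y \<in> ?T" using gK by (simp add: transporter_cj)
    qed
  qed
  have fT: "finite ?T" using Tsub assms(2) finite_subset by blast
  have "card ?C * card ?Q = card (\<Union>?Q)"
  proof (rule card_partition)
    show "finite ?Q" using fT by simp
    show "finite (\<Union>?Q)" using U fT by simp
    fix q assume "q \<in> ?Q"
    then have "q \<in> rcosets ?C" using rcosetsI[OF Csub] Tsub by blast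
    then show "card q = card ?C" using card_rcosets_equal[OF _ Csub] by simp
  next
    fix c1 c2 assume "c1 \<in> ?Q" "c2 \<in> ?Q" "c1 \<noteq> c2"
    moreover have "?Q \<subseteq> rcosets ?C" using rcosetsI[OF Csub] Tsub by blast
    ultimately show "c1 \<inter> c2 = {}"
      using rcos_disjoint[OF sC] unfolding pairwise_def disjnt_def by blast
  qed
  then show ?thesis using U by (simp add: fusion_hom_card_def mult.commute)
qed

lemma mem_centralizer_iff:
  assumes "H \<subseteq> carrier G" "x \<in> carrier G"
  shows "x \<in> centralizer_set G H \<longleftrightarrow> H \<subseteq> centralizer_set G {x}"
proof
  assume a: "x \<in> centralizer_set G H"
  show "H \<subseteq> centralizer_set G {x}"
  proof
    fix h assume h: "h \<in> H"
    have "x \<otimes> h = h \<otimes> x" using a h unfolding centralizer_set_def by simp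
    then show "h \<in> centralizer_set G {x}" using h assms(1) unfolding centralizer_set_def by auto
  qed
next
  assume a: "H \<subseteq> centralizer_set G {x}"
  have "\<forall>h\<in>H. x \<otimes> h = h \<otimes> x"
  proof
    fix h assume "h \<in> H"
    then have "h \<otimes> x = x \<otimes> h" using a unfolding centralizer_set_def by auto
    then show "x \<otimes> h = h \<otimes> x" by simp
  qed
  then show "x \<in> centralizer_set G H" using assms(2) unfolding centralizer_set_def by simp
qed

lemma nonid_sub:
  assumes "x \<in> carrier G"
  shows "nonid_p_subgroups (G\<lparr>carrier := centralizer_set G {x}\<rparr>) p
       = {H \<in> nonid_p_subgroups G p. H \<subseteq> centralizer_set G {x}}"
proof -
  let ?J = "centralizer_set G {x}"
  have sJ: "subgroup ?J G" using centralizer_subgroup assms by simp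
  have iff: "subgroup H (G\<lparr>carrier := ?J\<rparr>) \<longleftrightarrow> subgroup H G \<and> H \<subseteq> ?J" for H
  proof
    assume a: "subgroup H (G\<lparr>carrier := ?J\<rparr>)"
    have "subgroup H G" by (rule incl_subgroup[OF sJ a])
    moreover have "H \<subseteq> ?J" using subgroup.subset[OF a] by simp
    ultimately show "subgroup H G \<and> H \<subseteq> ?J" by (rule conjI)
  next
    assume a: "subgroup H G \<and> H \<subseteq> ?J"
    show "subgroup H (G\<lparr>carrier := ?J\<rparr>)" using subgroup_incl[OF conjunct1[OF a] sJ conjunct2[OF a]] .
  qed
  show ?thesis unfolding nonid_p_subgroups_def using iff by auto
qed

lemma cj_S:
  assumes "H \<in> nonid_p_subgroups G p" "g \<in> carrier G"
  shows "cj G g H \<in> nonid_p_subgroups G p"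
proof -
  have sH: "subgroup H G" and cH: "\<exists>n. card H = p ^ n" and ne: "H \<noteq> {\<one>}"
    using assms(1) by (auto simp: nonid_p_subgroups_def)
  have Hc: "H \<subseteq> carrier G" using sH subgroup.subset by blast
  have card: "card (cj G g H) = card H" using cj_card[OF Hc assms(2)] .
  have "cj G g H \<noteq> {\<one>}"
  proof
    assume e: "cj G g H = {\<one>}"
    then have c1: "card H = 1" using card by simp
    have o: "\<one> \<in> H" using sH subgroup.one_closed by blast
    obtain z where z: "H = {z}" using card_1_singletonE[OF c1] by blast
    show False using ne z o by simp
  qed
  then show ?thesis using cj_subgroup[OF sH assms(2)] card cH by (auto simp: nonid_p_subgroups_def)
qed

end



lemma card_filter_sum:
  assumes "finite A"
  shows "(of_nat (card {x\<in>A. P x}) :: rat) = (\<Sum>x\<in>A. of_nat (of_bool (P x)))"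
proof -
  have "card {x\<in>A. P x} = (\<Sum>x\<in>{x\<in>A. P x}. (1::nat))" by simp
  also have "\<dots> = (\<Sum>x\<in>A. if P x then 1 else 0)" using assms by (rule sum.inter_filter)
  finally show ?thesis by (simp add: of_bool_def)
qed

theorem proposition5p3:
  fixes G (structure) and p :: nat
  assumes "group G" and "finite (carrier G)" and "Factorial_Ring.prime p"
  shows "fusion_chi_defined G p \<and>
         fusion_chi G p = (1 / of_nat (order G)) *
           (\<Sum>x\<in>carrier G. poset_chi (G\<lparr>carrier := centralizer_set G {x}\<rparr>) p)"
proof -
  interpret group G by fact
  define S where "S = nonid_p_subgroups G p"
  define N where "N = order G"
  define c where "c = (\<lambda>H. card (centralizer_set G H))"
  have Ssub: "H \<subseteq> carrier G" if "H \<in> S" for H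
  proof -
    have "subgroup H G" using that unfolding S_def nonid_p_subgroups_def by simp
    then show ?thesis by (rule subgroup.subset)
  qed
  have finS: "finite S"
  proof (rule finite_subset)
    show "S \<subseteq> Pow (carrier G)" using Ssub by auto
    show "finite (Pow (carrier G))" using assms(2) by simp
  qed
  have NN: "N = card (carrier G)" by (simp add: N_def order_def)
  have Npos: "N > 0" unfolding NN using assms(2) one_closed card_gt_0_iff by blast
  have cpos: "c H > 0" if "H \<subseteq> carrier G" for H
  proof -
    have "\<one> \<in> centralizer_set G H" using that unfolding centralizer_set_def by auto
    moreover have "finite (centralizer_set G H)"
      using assms(2) by (rule finite_subset[rotated]) (auto simp: centralizer_set_def)
    ultimately show ?thesis unfolding c_def using card_gt_0_iff by blast
  qed
  have csum: "of_nat (c H) = (\<Sum>x\<in>carrier G. of_nat (of_bool (H \<subseteq> centralizer_set G {x})) :: rat)"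
    if "H \<subseteq> carrier G" for H
  proof -
    have "centralizer_set G H = {x\<in>carrier G. H \<subseteq> centralizer_set G {x}}"
      using mem_centralizer_iff[OF that] by (auto simp: centralizer_set_def)
    then show ?thesis unfolding c_def using card_filter_sum[OF assms(2)] by simp
  qed
  have trsum: "of_nat (card (transporter G H K)) = (\<Sum>g\<in>carrier G. of_nat (of_bool (cj G g H \<subseteq> K)) :: rat)" for H K
    unfolding transporter_cj by (rule card_filter_sum[OF assms(2)])
  have fhc: "of_nat (fusion_hom_card G H K) = of_nat (card (transporter G H K)) / (of_nat (c H) :: rat)"
    if "H \<in> S" for H K
  proof -
    have e: "fusion_hom_card G H K * c H = card (transporter G H K)"
      unfolding c_def by (rule transporter_card[OF Ssub[OF that] assms(2)])
    have "(of_nat (fusion_hom_card G H K) :: rat) * of_nat (c H) = of_nat (card (transporter G H K))"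
      unfolding e[symmetric] by simp
    then show ?thesis using cpos[OF Ssub[OF that]] by (simp add: eq_divide_eq)
  qed
  have cjS: "cj G g H \<in> S" if "H \<in> S" "g \<in> carrier G" for H g
    using cj_S that unfolding S_def by blast
  have cc: "c (cj G g H) = c H" if "H \<in> S" "g \<in> carrier G" for H g
    unfolding c_def by (rule centralizer_cj[OF Ssub[OF that(1)] that(2) assms(2)])

  obtain w where hw: "\<forall>A\<in>S. (\<Sum>K\<in>S. of_nat (of_bool (A \<subseteq> K)) * w K) = (of_nat (c A) / of_nat N :: rat)"
    using weight_exists[OF finS, of "\<lambda>A. of_nat (c A) / of_nat N"] by blast
  have W: "is_weighting S (fusion_hom_card G) w"
    unfolding is_weighting_def
  proof
    fix H assume H: "H \<in> S"
    have "(\<Sum>K\<in>S. of_nat (fusion_hom_card G H K) * w K)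
        = (\<Sum>K\<in>S. (\<Sum>g\<in>carrier G. of_nat (of_bool (cj G g H \<subseteq> K)) * w K)) / of_nat (c H)"
      by (simp add: sum_divide_distrib fhc[OF H] trsum sum_distrib_right)
    also have "(\<Sum>K\<in>S. (\<Sum>g\<in>carrier G. of_nat (of_bool (cj G g H \<subseteq> K)) * w K))
        = (\<Sum>g\<in>carrier G. \<Sum>K\<in>S. of_nat (of_bool (cj G g H \<subseteq> K)) * w K)"
      by (rule sum.swap)
    also have "\<dots> = (\<Sum>g\<in>carrier G. of_nat (c H) / of_nat N)"
    proof (rule sum.cong[OF refl])
      fix g assume g: "g \<in> carrier G"
      have "(\<Sum>K\<in>S. of_nat (of_bool (cj G g H \<subseteq> K)) * w K) = of_nat (c (cj G g H)) / of_nat N"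
        using bspec[OF hw cjS[OF H g]] .
      then show "(\<Sum>K\<in>S. of_nat (of_bool (cj G g H \<subseteq> K)) * w K) = of_nat (c H) / of_nat N"
        using cc[OF H g] by simp
    qed
    also have "\<dots> = of_nat (c H)" using Npos by (simp add: NN)
    finally show "(\<Sum>K\<in>S. of_nat (fusion_hom_card G H K) * w K) = 1"
      using cpos[OF Ssub[OF H]] by simp
  qed

  obtain v where hv: "\<forall>K\<in>S. (\<Sum>H\<in>S. v H * of_nat (of_bool (H \<subseteq> K))) = (1::rat)"
    using coweight_exists[OF finS, of "\<lambda>_. 1"] by blast
  define k where "k = (\<lambda>H. of_nat (c H) * v H / of_nat N)"
  have CW: "is_coweighting S (fusion_hom_card G) k"
    unfolding is_coweighting_def
  proof
    fix K assume K: "K \<in> S"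
    have "(\<Sum>H\<in>S. k H * of_nat (fusion_hom_card G H K))
        = (\<Sum>H\<in>S. (\<Sum>g\<in>carrier G. v H * of_nat (of_bool (cj G g H \<subseteq> K))) / of_nat N)"
    proof (rule sum.cong[OF refl])
      fix H assume H: "H \<in> S"
      have cH: "(of_nat (c H) :: rat) \<noteq> 0" using cpos[OF Ssub[OF H]] by simp
      have "(\<Sum>g\<in>carrier G. v H * of_nat (of_bool (cj G g H \<subseteq> K)))
          = v H * (\<Sum>g\<in>carrier G. of_nat (of_bool (cj G g H \<subseteq> K)))"
        by (rule sum_distrib_left[symmetric])
      then show "k H * of_nat (fusion_hom_card G H K)
          = (\<Sum>g\<in>carrier G. v H * of_nat (of_bool (cj G g H \<subseteq> K))) / of_nat N"
        using cH by (simp add: k_def fhc[OF H] trsum)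
    qed
    also have "\<dots> = (\<Sum>H\<in>S. \<Sum>g\<in>carrier G. v H * of_nat (of_bool (cj G g H \<subseteq> K))) / of_nat N"
      by (rule sum_divide_distrib[symmetric])
    also have "(\<Sum>H\<in>S. \<Sum>g\<in>carrier G. v H * of_nat (of_bool (cj G g H \<subseteq> K)))
        = (\<Sum>g\<in>carrier G. \<Sum>H\<in>S. v H * of_nat (of_bool (H \<subseteq> cj G (inv g) K)))"
      by (subst sum.swap) (auto intro!: sum.cong simp: cj_sub_iff Ssub K)
    also have "\<dots> = (\<Sum>g\<in>carrier G. 1)"
    proof (rule sum.cong[OF refl])
      fix g assume g: "g \<in> carrier G"
      show "(\<Sum>H\<in>S. v H * of_nat (of_bool (H \<subseteq> cj G (inv g) K))) = 1"
        using bspec[OF hv cjS[OF K inv_closed[OF g]]] .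
    qed
    finally show "(\<Sum>H\<in>S. k H * of_nat (fusion_hom_card G H K)) = 1"
      using Npos by (simp add: NN)
  qed

  have def: "fusion_chi_defined G p"
    unfolding fusion_chi_defined_def has_euler_char_def S_def[symmetric] using W CW by blast
  have chi: "fusion_chi G p = sum k S"
    unfolding fusion_chi_def S_def[symmetric] using euler_char_eq[OF finS exI[of "is_weighting S (fusion_hom_card G)" w, OF W] CW] .
  have "sum k S = (\<Sum>H\<in>S. of_nat (c H) * v H) / of_nat N"
    unfolding k_def sum_divide_distrib ..
  also have "(\<Sum>H\<in>S. of_nat (c H) * v H)
      = (\<Sum>H\<in>S. \<Sum>x\<in>carrier G. of_nat (of_bool (H \<subseteq> centralizer_set G {x})) * v H)"
    by (rule sum.cong[OF refl]) (simp add: csum Ssub sum_distrib_right)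
  also have "\<dots> = (\<Sum>x\<in>carrier G. \<Sum>H\<in>S. of_nat (of_bool (H \<subseteq> centralizer_set G {x})) * v H)"
    by (rule sum.swap)
  also have "\<dots> = (\<Sum>x\<in>carrier G. poset_chi (G\<lparr>carrier := centralizer_set G {x}\<rparr>) p)"
  proof (rule sum.cong[OF refl])
    fix x assume x: "x \<in> carrier G"
    let ?C = "centralizer_set G {x}"
    define Sx where "Sx = nonid_p_subgroups (G\<lparr>carrier := ?C\<rparr>) p"
    have Sx: "Sx = {H\<in>S. H \<subseteq> ?C}" unfolding Sx_def S_def by (rule nonid_sub[OF x])
    have finSx: "finite Sx" unfolding Sx using finS by simp
    obtain wx where "\<forall>a\<in>Sx. (\<Sum>b\<in>Sx. of_nat (of_bool (a \<subseteq> b)) * wx b) = (1::rat)"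
      using weight_exists[OF finSx, of "\<lambda>_. 1"] by blast
    then have Wx: "\<exists>k. is_weighting Sx (\<lambda>H K. of_bool (H \<subseteq> K)) k"
      unfolding is_weighting_def by blast
    have CWx: "is_coweighting Sx (\<lambda>H K. of_bool (H \<subseteq> K)) v"
      unfolding is_coweighting_def
    proof
      fix K assume K: "K \<in> Sx"
      have KS: "K \<in> S" and KC: "K \<subseteq> ?C" using K Sx by auto
      have "(\<Sum>H\<in>Sx. v H * of_nat (of_bool (H \<subseteq> K))) = (\<Sum>H\<in>S. v H * of_nat (of_bool (H \<subseteq> K)))"
      proof (rule sum.mono_neutral_left[OF finS])
        show "Sx \<subseteq> S" using Sx by auto
        show "\<forall>i\<in>S - Sx. v i * of_nat (of_bool (i \<subseteq> K)) = 0" using Sx KC by auto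
      qed
      also have "\<dots> = 1" using bspec[OF hv KS] .
      finally show "(\<Sum>H\<in>Sx. v H * of_nat (of_bool (H \<subseteq> K))) = 1" .
    qed
    have "poset_chi (G\<lparr>carrier := ?C\<rparr>) p = sum v Sx"
      unfolding poset_chi_def Sx_def[symmetric] by (rule euler_char_eq[OF finSx Wx CWx])
    also have "\<dots> = (\<Sum>H\<in>S. if H \<subseteq> ?C then v H else 0)"
      unfolding Sx by (rule sum.inter_filter[OF finS])
    also have "\<dots> = (\<Sum>H\<in>S. of_nat (of_bool (H \<subseteq> ?C)) * v H)"
      by (rule sum.cong[OF refl]) simp
    finally show "(\<Sum>H\<in>S. of_nat (of_bool (H \<subseteq> ?C)) * v H) = poset_chi (G\<lparr>carrier := ?C\<rparr>) p"
      by simp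
  qed
  finally show ?thesis using def chi by (simp add: N_def)
qed


end
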